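(* Let $G$ be a graph and ${\cal P}=\{{\cal P}(v)\colon v\in V_G\}$ a family where each ${\cal P}(v)$ is a partition of $N_G(v)$. Then $\gamma(G\circ{\cal P})=|V_G|$.
   Context: All graphs are finite and simple. A set $D\subseteq V_G$ is a dominating set of $G$ if every vertex of $V_G-D$ has a neighbor in $D$; $\gamma(G)$ is the minimum cardinality of a dominating set. For a graph $G$ and a family ${\cal P}=\{{\cal P}(v)\colon v\in V_G\}$, where ${\cal P}(v)$ is a partition of $N_G(v)$ into nonempty blocks, the ${\cal P}$-corona $G\circ{\cal P}$ is the graph with vertex set $\{(v,1)\colon v\in V_G\}\cup\bigcup_{v\in V_G}\{(v,A)\colon A\in{\cal P}(v)\}$ and edge set $\bigcup_{v\in V_G}\{(v,1)(v,A)\colon A\in{\cal P}(v)\}\cup\bigcup_{uv\in E_G}\{(v,A)(u,B)\colon u\in A,\ v\in B\}$ (here $A\in{\cal P}(v)$, $B\in{\cal P}(u)$). *)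

theory Defs
  imports Main
begin

definition simple_graph :: "'a set \<Rightarrow> ('a \<Rightarrow> 'a \<Rightarrow> bool) \<Rightarrow> bool" where
  "simple_graph V E \<longleftrightarrow> finite V \<and> (\<forall>u v. E u v \<longrightarrow> u \<in> V \<and> v \<in> V)
     \<and> (\<forall>u v. E u v \<longrightarrow> E v u) \<and> (\<forall>v. \<not> E v v)"

definition nbhd :: "'a set \<Rightarrow> ('a \<Rightarrow> 'a \<Rightarrow> bool) \<Rightarrow> 'a \<Rightarrow> 'a set" where
  "nbhd V E v = {u \<in> V. E v u}"

definition is_partition :: "'a set set \<Rightarrow> 'a set \<Rightarrow> bool" where
  "is_partition P S \<longleftrightarrow> (\<forall>A\<in>P. A \<noteq> {}) \<and> \<Union>P = S
     \<and> (\<forall>A\<in>P. \<forall>B\<in>P. A \<noteq> B \<longrightarrow> A \<inter> B = {})"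

definition dominating :: "'b set \<Rightarrow> ('b \<Rightarrow> 'b \<Rightarrow> bool) \<Rightarrow> 'b set \<Rightarrow> bool" where
  "dominating V E D \<longleftrightarrow> D \<subseteq> V \<and> (\<forall>x \<in> V - D. \<exists>y \<in> D. E x y)"

definition domination_number :: "'b set \<Rightarrow> ('b \<Rightarrow> 'b \<Rightarrow> bool) \<Rightarrow> nat" where
  "domination_number V E = Min {card D | D. dominating V E D}"

text \<open>P-corona: vertex (v,1) is encoded as (v, None), vertex (v,A) as (v, Some A).\<close>
definition corona_vertices :: "'a set \<Rightarrow> ('a \<Rightarrow> 'a set set) \<Rightarrow> ('a \<times> 'a set option) set" where
  "corona_vertices V P = {(v, None) | v. v \<in> V} \<union> {(v, Some A) | v A. v \<in> V \<and> A \<in> P v}"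

definition corona_edge :: "'a set \<Rightarrow> ('a \<Rightarrow> 'a \<Rightarrow> bool) \<Rightarrow> ('a \<Rightarrow> 'a set set)
    \<Rightarrow> ('a \<times> 'a set option) \<Rightarrow> ('a \<times> 'a set option) \<Rightarrow> bool" where
  "corona_edge V E P x y \<longleftrightarrow>
     (\<exists>v A. v \<in> V \<and> A \<in> P v \<and>
        ((x = (v, None) \<and> y = (v, Some A)) \<or> (x = (v, Some A) \<and> y = (v, None))))
   \<or> (\<exists>u v A B. E u v \<and> A \<in> P v \<and> B \<in> P u \<and> u \<in> A \<and> v \<in> B
        \<and> x = (v, Some A) \<and> y = (u, Some B))"

end

theory Submission
  imports Defs
begin

theorem lemma2p11:
  fixes V :: "'a set" and E :: "'a \<Rightarrow> 'a \<Rightarrow> bool" and P :: "'a \<Rightarrow> 'a set set"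
  assumes "simple_graph V E"
    and "\<forall>v \<in> V. is_partition (P v) (nbhd V E v)"
  shows "domination_number (corona_vertices V P) (corona_edge V E P) = card V"
proof -
  let ?C = "corona_vertices V P"
  let ?R = "corona_edge V E P"
  have fV: "finite V" using assms(1) by (simp add: simple_graph_def)
  have sub: "?C \<subseteq> V \<times> (insert None (Some ` Pow V))"
  proof
    fix x assume "x \<in> ?C"
    then show "x \<in> V \<times> (insert None (Some ` Pow V))"
    proof (cases rule: UnE[OF \<open>x \<in> ?C\<close>[unfolded corona_vertices_def]])
      case 1 then show ?thesis by auto
    next
      case 2
      then obtain v A where v: "v \<in> V" "A \<in> P v" "x = (v, Some A)" by blast
      have "A \<subseteq> nbhd V E v" using assms(2) v unfolding is_partition_def by blast
      then have "A \<subseteq> V" by (auto simp: nbhd_def)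
      then show ?thesis using v by auto
    qed
  qed
  have fC: "finite ?C" by (rule finite_subset[OF sub]) (use fV in auto)
  let ?D0 = "(\<lambda>v. (v, None)) ` V"
  have d0: "dominating ?C ?R ?D0"
    unfolding dominating_def
  proof
    show "?D0 \<subseteq> ?C" by (auto simp: corona_vertices_def)
    show "\<forall>x\<in>?C - ?D0. \<exists>y\<in>?D0. ?R x y"
    proof
      fix x assume "x \<in> ?C - ?D0"
      then obtain v A where v: "v \<in> V" "A \<in> P v" "x = (v, Some A)"
        by (auto simp: corona_vertices_def)
      then show "\<exists>y\<in>?D0. ?R x y" unfolding corona_edge_def by blast
    qed
  qed
  have cD0: "card ?D0 = card V" by (rule card_image) (auto simp: inj_on_def)
  have lb: "card V \<le> card D" if D: "dominating ?C ?R D" for D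
  proof -
    have DC: "D \<subseteq> ?C" using D by (simp add: dominating_def)
    have "V \<subseteq> fst ` D"
    proof
      fix v assume v: "v \<in> V"
      show "v \<in> fst ` D"
      proof (cases "(v, None) \<in> D")
        case True then show ?thesis by force
      next
        case False
        have "(v, None) \<in> ?C" using v by (auto simp: corona_vertices_def)
        with False D obtain y where y: "y \<in> D" "?R (v, None) y"
          unfolding dominating_def by blast
        from y(2) have "fst y = v" unfolding corona_edge_def by auto
        then show ?thesis using y(1) by force
      qed
    qed
    then have "card V \<le> card (fst ` D)"
      by (rule card_mono[rotated]) (use finite_subset[OF DC fC] in auto)
    also have "\<dots> \<le> card D" by (rule card_image_le) (rule finite_subset[OF DC fC])
    finally show ?thesis .
  qed
  have fin: "finite {card D | D. dominating ?C ?R D}"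
  proof -
    have "{card D | D. dominating ?C ?R D} \<subseteq> card ` Pow ?C"
      by (auto simp: dominating_def)
    then show ?thesis using fC by (meson finite_Pow_iff finite_imageI finite_subset)
  qed
  show ?thesis unfolding domination_number_def
  proof (rule Min_eqI[OF fin])
    show "card V \<in> {card D | D. dominating ?C ?R D}"
      using d0 cD0[symmetric] by blast
  qed (use lb in auto)
qed

end
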